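(* For all natural numbers $0\le i<k$, the game language $W_{i,k}$ satisfies $\mu(W_{i,k})=0$ if $k$ is odd and $\mu(W_{i,k})=1$ if $k$ is even.
   Context: The full binary tree is $V=\{L,R\}^*$ (root $\epsilon$). For a finite alphabet $\Sigma$, a $\Sigma$-tree is a map $t:V\to\Sigma$, $\mathcal{T}_\Sigma=\Sigma^V$, and $\mu$ is the coin-flipping (uniform product) probability measure on $\mathcal{T}_\Sigma$: $\mu(\{t : t(v_1)=a_1,\dots,t(v_m)=a_m\})=|\Sigma|^{-m}$ for pairwise distinct $v_j$. For $i<k$ let $\Sigma_{i,k}=\{\forall,\exists\}\times\{i,i+1,\dots,k\}$. The language $W_{i,k}\subseteq\mathcal{T}_{\Sigma_{i,k}}$ is the set of trees accepted by the automaton $\mathcal{A}_{i,k}$ with states $q_i,\dots,q_k$, initial state $q_i$, priorities $\pi(q_j)=j$, and transitions $\delta(q_j,(\exists,m))=(L,q_m)\vee(R,q_m)$ and $\delta(q_j,(\forall,m))=(L,q_m)\wedge(R,q_m)$ for all $j,m\in\{i,\dots,k\}$. Acceptance of $t$: player $\exists$ wins the game starting at $\langle\epsilon,q_i\rangle$ in which from $\langle x,q\rangle$ the game moves to $\langle x,\delta(q,t(x))\rangle$; at a disjunction $\exists$ chooses a disjunct, at a conjunction $\forall$ chooses a conjunct; $\langle x,(D,q)\rangle$ moves to $\langle xD,q\rangle$ for $D\in\{L,R\}$; an infinite play is won by $\exists$ iff the largest priority among states visited infinitely often is even. (Equivalently: at each vertex labeled $(P,m)$ player $P$ chooses the next child,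 and $\exists$ wins an infinite path iff the largest number $m$ appearing infinitely often in the labels along it is even.) *)

theory Defs
  imports "HOL-Probability.Probability"
begin

text \<open>Vertices of the full binary tree: words over {L,R}; L = False, R = True.
  The child xD of x is x @ [D].\<close>
type_synonym vertex = "bool list"

datatype player = PAll | PEx

definition Sigma_ik :: "nat \<Rightarrow> nat \<Rightarrow> (player \<times> nat) set" where
  "Sigma_ik i k = UNIV \<times> {i..k}"

definition coin_measure :: "(player \<times> nat) set \<Rightarrow> (vertex \<Rightarrow> player \<times> nat) measure" where
  "coin_measure S = PiM UNIV (\<lambda>_. uniform_count_measure S)"

definition path_vertex :: "(nat \<Rightarrow> bool) \<Rightarrow> nat \<Rightarrow> vertex" where
  "path_vertex p n = map p [0..<n]"

text \<open>Strategies are positional (the history is determined by the current vertex):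
  sigma x is the chosen direction at vertex x.\<close>
definition consistent :: "(vertex \<Rightarrow> player \<times> nat) \<Rightarrow> (vertex \<Rightarrow> bool) \<Rightarrow> (nat \<Rightarrow> bool) \<Rightarrow> bool" where
  "consistent t \<sigma> p \<longleftrightarrow>
     (\<forall>n. fst (t (path_vertex p n)) = PEx \<longrightarrow> p n = \<sigma> (path_vertex p n))"

text \<open>The states visited are q_i at the root and then q_m where m is the label number of the
  parent vertex; so the priorities seen infinitely often are the label numbers seen
  infinitely often.\<close>
definition parity_win :: "(vertex \<Rightarrow> player \<times> nat) \<Rightarrow> (nat \<Rightarrow> bool) \<Rightarrow> bool" where
  "parity_win t p \<longleftrightarrow>
     even (Max {m. \<exists>\<^sub>\<infinity> n. snd (t (path_vertex p n)) = m})"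

definition W :: "nat \<Rightarrow> nat \<Rightarrow> (vertex \<Rightarrow> player \<times> nat) set" where
  "W i k = {t. (\<forall>x. t x \<in> Sigma_ik i k) \<and>
              (\<exists>\<sigma>. \<forall>p. consistent t \<sigma> p \<longrightarrow> parity_win t p)}"

end

theory Submission
  imports Defs
begin

fun win :: "player \<Rightarrow> nat \<Rightarrow> (vertex \<Rightarrow> player \<times> nat) \<Rightarrow> nat \<Rightarrow> vertex \<Rightarrow> bool" where
  "win P k t 0 x = False"
| "win P k t (Suc n) x = (snd (t x) = k \<or>
     (if fst (t x) = P then win P k t n (x@[False]) \<or> win P k t n (x@[True])
      else win P k t n (x@[False]) \<and> win P k t n (x@[True])))"

lemma win_local:
  assumes "\<And>w. t (y@w) = t' (y@w)"
  shows "win P k t n y = win P k t' n y"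
  using assms
proof (induction n arbitrary: y)
  case 0 then show ?case by simp
next
  case (Suc n)
  have e: "t y = t' y" using Suc.prems[of "[]"] by simp
  have "win P k t n (y@[b]) = win P k t' n (y@[b])" for b
    by (rule Suc.IH) (metis Suc.prems append.assoc append_Cons append_Nil)
  then show ?case by (simp add: e)
qed

lemma space_coin: "space (coin_measure S) = {t. \<forall>x. t x \<in> S}"
  by (auto simp: coin_measure_def space_PiM PiE_def Pi_def space_uniform_count_measure)

lemma single_meas:
  assumes "y \<in> K"
  shows "{s \<in> space (PiM K (\<lambda>_. uniform_count_measure S)). Q (s y)} \<in> sets (PiM K (\<lambda>_. uniform_count_measure S))"
  by (rule sets_Collect_single'[OF assms]) (auto simp: sets_uniform_count_measure space_uniform_count_measure)

lemma win_meas: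
  assumes "\<And>w. y@w \<in> K"
  shows "{s \<in> space (PiM K (\<lambda>_. uniform_count_measure S)). win P k s n y} \<in> sets (PiM K (\<lambda>_. uniform_count_measure S))"
  using assms
proof (induction n arbitrary: y)
  case 0 then show ?case by simp
next
  case (Suc n)
  let ?M = "PiM K (\<lambda>_. uniform_count_measure S)"
  have yK: "y \<in> K" using Suc.prems[of "[]"] by simp
  have W: "{s \<in> space ?M. win P k s n (y@[b])} \<in> sets ?M" for b
    by (rule Suc.IH) (metis Suc.prems append.assoc append_Cons append_Nil)
  have eq: "{s \<in> space ?M. win P k s (Suc n) y} =
     {s \<in> space ?M. snd (s y) = k} \<union>
     ({s \<in> space ?M. fst (s y) = P} \<inter> ({s \<in> space ?M. win P k s n (y@[False])} \<union> {s \<in> space ?M. win P k s n (y@[True])})) \<union>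
     ({s \<in> space ?M. fst (s y) \<noteq> P} \<inter> ({s \<in> space ?M. win P k s n (y@[False])} \<inter> {s \<in> space ?M. win P k s n (y@[True])}))"
    by auto
  show ?case unfolding eq
    by (intro sets.Un sets.Int W single_meas yK)
qed


lemma coin_prob: "finite S \<Longrightarrow> S \<noteq> {} \<Longrightarrow> prob_space (coin_measure S)"
  unfolding coin_measure_def by (intro prob_space_PiM prob_space_uniform_count_measure)

lemma coord_indep:
  assumes "finite S" "S \<noteq> {}"
  shows "prob_space.indep_vars (coin_measure S) (\<lambda>_. uniform_count_measure S) (\<lambda>i t. t i) UNIV"
proof -
  interpret M': prob_space "uniform_count_measure S" by (rule prob_space_uniform_count_measure[OF assms])
  interpret product_prob_space "\<lambda>_::vertex. uniform_count_measure S" UNIV ..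
  interpret C: prob_space "coin_measure S" by (rule coin_prob[OF assms])
  have rv: "(\<lambda>t. t i) \<in> measurable (coin_measure S) (uniform_count_measure S)" for i
    unfolding coin_measure_def by (rule measurable_component_singleton) simp
  show ?thesis
  proof (subst C.indep_vars_iff_distr_eq_PiM[where I=UNIV and M'="\<lambda>_. uniform_count_measure S" and X="\<lambda>i t. t i", OF _ rv])
    show "distr (coin_measure S) (Pi\<^sub>M UNIV (\<lambda>i. uniform_count_measure S)) (\<lambda>x. \<lambda>i\<in>UNIV. x i) =
      Pi\<^sub>M UNIV (\<lambda>i. distr (coin_measure S) (uniform_count_measure S) (\<lambda>t. t i))"
      unfolding coin_measure_def by (simp add: PiM_component) (simp add: restrict_def distr_id)
  qed simp
qed


lemma indep3:
  fixes S A :: "(player \<times> nat) set" and x :: vertex and P :: player and k n :: nat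
  assumes fin: "finite S" "S \<noteq> {}" and J: "J \<subseteq> {0,1,2::nat}" "J \<noteq> {}"
  defines "E \<equiv> \<lambda>j::nat. if j = 0 then {t \<in> space (coin_measure S). t x \<in> A}
      else {t \<in> space (coin_measure S). \<not> win P k t n (x@[j=2])}"
  shows "measure (coin_measure S) (\<Inter>j\<in>J. E j) = (\<Prod>j\<in>J. measure (coin_measure S) (E j))"
proof -
  interpret C: prob_space "coin_measure S" by (rule coin_prob[OF fin])
  define K where "K \<equiv> \<lambda>j::nat. if j = 0 then {x} else range (\<lambda>w. x@[j=2]@w)"
  define B where "B \<equiv> \<lambda>j::nat. if j = 0 then {s \<in> space (PiM (K j) (\<lambda>_. uniform_count_measure S)). s x \<in> A}
      else {s \<in> space (PiM (K j) (\<lambda>_. uniform_count_measure S)). \<not> win P k s n (x@[j=2])}"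
  have ind: "C.indep_vars (\<lambda>j. PiM (K j) (\<lambda>_. uniform_count_measure S)) (\<lambda>j t. restrict (\<lambda>i. t i) (K j)) {0,1,2}"
    by (rule C.indep_vars_restrict[OF coord_indep[OF fin]]) (auto simp: K_def disjoint_family_on_def)
  have Bs: "B j \<in> sets (PiM (K j) (\<lambda>_. uniform_count_measure S))" for j
  proof (cases "j = 0")
    case True then show ?thesis unfolding B_def K_def using single_meas[of x "{x}" S "\<lambda>a. a \<in> A"] by simp
  next
    case False
    have "{s \<in> space (PiM (K j) (\<lambda>_. uniform_count_measure S)). \<not> win P k s n (x@[j=2])} =
      space (PiM (K j) (\<lambda>_. uniform_count_measure S)) - {s \<in> space (PiM (K j) (\<lambda>_. uniform_count_measure S)). win P k s n (x@[j=2])}"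
      by auto
    also have "\<dots> \<in> sets (PiM (K j) (\<lambda>_. uniform_count_measure S))"
      by (intro sets.compl_sets win_meas) (simp add: K_def False)
    finally show ?thesis using False unfolding B_def by simp
  qed
  have pre: "(\<lambda>t. restrict (\<lambda>i. t i) (K j)) -` B j \<inter> space (coin_measure S) = E j" for j
  proof (cases "j = 0")
    case True then show ?thesis
      by (auto simp: B_def E_def K_def space_coin space_PiM space_uniform_count_measure)
  next
    case False
    have "win P k (restrict t (K j)) n (x@[j=2]) = win P k t n (x@[j=2])" for t
      by (rule win_local) (simp add: K_def False)
    then show ?thesis using False
      by (auto simp: B_def E_def space_coin space_PiM space_uniform_count_measure)
  qed
  have "C.prob (\<Inter>j\<in>J. (\<lambda>t. restrict (\<lambda>i. t i) (K j)) -` B j \<inter> space (coin_measure S)) =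
      (\<Prod>j\<in>J. C.prob ((\<lambda>t. restrict (\<lambda>i. t i) (K j)) -` B j \<inter> space (coin_measure S)))"
    by (rule C.indep_varsD[OF ind J(2) _ J(1) Bs]) (use J in \<open>auto intro: finite_subset\<close>)
  then show ?thesis by (simp add: pre)
qed


lemma UNIV_player: "(UNIV :: player set) = {PAll, PEx}"
  using player.exhaust by auto

lemma coord_measure:
  assumes "finite S" "S \<noteq> {}" "A \<subseteq> S"
  shows "measure (coin_measure S) {t \<in> space (coin_measure S). t x \<in> A} = card A / card S"
proof -
  interpret M': prob_space "uniform_count_measure S" by (rule prob_space_uniform_count_measure[OF assms(1,2)])
  interpret product_prob_space "\<lambda>_::vertex. uniform_count_measure S" UNIV ..
  have rv: "(\<lambda>t. t x) \<in> measurable (coin_measure S) (uniform_count_measure S)"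
    unfolding coin_measure_def by (rule measurable_component_singleton) simp
  have "measure (uniform_count_measure S) A = measure (distr (coin_measure S) (uniform_count_measure S) (\<lambda>t. t x)) A"
    unfolding coin_measure_def by (simp add: PiM_component)
  also have "\<dots> = measure (coin_measure S) {t \<in> space (coin_measure S). t x \<in> A}"
    using assms by (subst measure_distr[OF rv]) (auto simp: sets_uniform_count_measure intro!: arg_cong[where f="measure _"])
  finally show ?thesis using assms by (simp add: measure_uniform_count_measure)
qed

lemma sets_coin_single: "{t \<in> space (coin_measure S). Q (t x)} \<in> sets (coin_measure S)"
  unfolding coin_measure_def by (rule single_meas) simp

lemma sets_coin_fail: "{t \<in> space (coin_measure S). \<not> win P k t n x} \<in> sets (coin_measure S)"
proof -
  have "{t \<in> space (coin_measure S). \<not> win P k t n x} = space (coin_measure S) - {t \<in> space (coin_measure S). win P k t n x}"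
    by auto
  also have "\<dots> \<in> sets (coin_measure S)"
    unfolding coin_measure_def by (intro sets.compl_sets win_meas) simp
  finally show ?thesis .
qed

lemma fail_prob:
  assumes ik: "i < k"
  shows "measure (coin_measure (Sigma_ik i k)) {t \<in> space (coin_measure (Sigma_ik i k)). \<not> win P k t n x}
     = (real (k-i) / real (k+1-i)) ^ n"
proof (induction n arbitrary: x)
  case 0
  interpret C: prob_space "coin_measure (Sigma_ik i k)" by (rule coin_prob) (use ik in \<open>auto simp: Sigma_ik_def UNIV_player\<close>)
  show ?case by (simp add: C.prob_space)
next
  case (Suc n)
  define S where "S = Sigma_ik i k"
  have fin: "finite S" "S \<noteq> {}" using ik by (auto simp: S_def Sigma_ik_def UNIV_player)
  interpret C: prob_space "coin_measure S" by (rule coin_prob[OF fin])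
  define Aa where "Aa = {P} \<times> {i..<k}"
  define Ab where "Ab = (UNIV - {P}) \<times> {i..<k}"
  define h where "h = real (k-i) / (2 * real (k+1-i))"
  define q where "q = (real (k-i) / real (k+1-i)) ^ n"
  have cS: "card S = 2 * (k+1-i)" by (simp add: S_def Sigma_ik_def UNIV_player card_cartesian_product)
  have cUP: "card (UNIV - {P}) = 1" by (cases P) (auto simp: UNIV_player)
  have subA: "Aa \<subseteq> S" "Ab \<subseteq> S" by (auto simp: Aa_def Ab_def S_def Sigma_ik_def)
  have cA: "card Aa = k - i" "card Ab = k - i"
    by (auto simp: Aa_def Ab_def card_cartesian_product cUP)
  let ?E = "\<lambda>A. {t \<in> space (coin_measure S). t x \<in> A}"
  let ?F = "\<lambda>b. {t \<in> space (coin_measure S). \<not> win P k t n (x@[b])}"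
  have mEa: "measure (coin_measure S) (?E Aa) = h" and mEb: "measure (coin_measure S) (?E Ab) = h"
    using coord_measure[OF fin subA(1), of x] coord_measure[OF fin subA(2), of x]
    by (simp_all add: cA cS h_def)
  have mF: "measure (coin_measure S) (?F b) = q" for b
    using Suc.IH[of "x@[b]"] by (simp add: S_def q_def)
  have ind: "measure (coin_measure S) (?E A \<inter> ?F False \<inter> ?F True) = measure (coin_measure S) (?E A) * q * q"
    "measure (coin_measure S) (?E A \<inter> ?F False) = measure (coin_measure S) (?E A) * q"
    "measure (coin_measure S) (?E A \<inter> ?F True) = measure (coin_measure S) (?E A) * q" for A
    using indep3[OF fin, where J="{0,1,2}" and A=A and x=x and P=P and k=k and n=n] indep3[OF fin, where J="{0,1}" and A=A and x=x and P=P and k=k and n=n]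
      indep3[OF fin, where J="{0,2}" and A=A and x=x and P=P and k=k and n=n] mF
    by (simp_all add: Int_ac mult_ac)
  have meas: "?E A \<in> sets (coin_measure S)" "?F b \<in> sets (coin_measure S)" for A b
    by (rule sets_coin_single, rule sets_coin_fail)
  have seteq: "{t \<in> space (coin_measure S). \<not> win P k t (Suc n) x} =
     (?E Aa \<inter> ?F False \<inter> ?F True) \<union> ((?E Ab \<inter> ?F False) \<union> (?E Ab \<inter> ?F True))"
  proof -
    have pt: "(\<not> win P k t (Suc n) x) \<longleftrightarrow> (t x \<in> Aa \<and> \<not> win P k t n (x@[False]) \<and> \<not> win P k t n (x@[True])) \<or>
      (t x \<in> Ab \<and> (\<not> win P k t n (x@[False]) \<or> \<not> win P k t n (x@[True])))"
      if "t \<in> space (coin_measure S)" for t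
    proof -
      obtain pl m where tx: "t x = (pl, m)" by fastforce
      have "t x \<in> S" using that unfolding space_coin by blast
      then have "m \<in> {i..k}" using tx by (simp add: S_def Sigma_ik_def)
      then show ?thesis using tx by (auto simp: Aa_def Ab_def)
    qed
    show ?thesis using pt by blast
  qed
  have "measure (coin_measure S) {t \<in> space (coin_measure S). \<not> win P k t (Suc n) x} =
     measure (coin_measure S) (?E Aa \<inter> ?F False \<inter> ?F True) + measure (coin_measure S) ((?E Ab \<inter> ?F False) \<union> (?E Ab \<inter> ?F True))"
    unfolding seteq
    by (rule C.finite_measure_Union) (use meas in \<open>auto simp: Aa_def Ab_def\<close>)
  also have "measure (coin_measure S) ((?E Ab \<inter> ?F False) \<union> (?E Ab \<inter> ?F True)) =
      measure (coin_measure S) (?E Ab \<inter> ?F False) + measure (coin_measure S) (?E Ab \<inter> ?F True)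
      - measure (coin_measure S) (?E Ab \<inter> ?F False \<inter> ?F True)"
    by (subst measure_Un3) (use meas in \<open>auto simp: C.fmeasurable_eq_sets Int_ac intro!: arg_cong[where f="measure _"]\<close>)
  finally have "measure (coin_measure S) {t \<in> space (coin_measure S). \<not> win P k t (Suc n) x} = 2 * h * q"
    by (simp add: ind mEa mEb algebra_simps)
  also have "2 * h * q = (real (k-i) / real (k+1-i)) ^ Suc n"
  proof -
    have h2: "2 * h = real (k-i) / real (k+1-i)" unfolding h_def by simp
    show ?thesis by (simp only: h2 q_def power_Suc)
  qed
  finally show ?case by (simp add: S_def)
qed


lemma null_N:
  assumes ik: "i < k"
  shows "(\<Union>x. {t \<in> space (coin_measure (Sigma_ik i k)). \<forall>n. \<not> win P k t n x}) \<in> null_sets (coin_measure (Sigma_ik i k))"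
proof -
  define S where "S = Sigma_ik i k"
  have fin: "finite S" "S \<noteq> {}" using ik by (auto simp: S_def Sigma_ik_def UNIV_player)
  interpret C: prob_space "coin_measure S" by (rule coin_prob[OF fin])
  define c where "c = real (k-i) / real (k+1-i)"
  have c: "0 \<le> c" "c < 1" using ik by (auto simp: c_def)
  have "{t \<in> space (coin_measure S). \<forall>n. \<not> win P k t n x} \<in> null_sets (coin_measure S)" for x
  proof -
    let ?Z = "{t \<in> space (coin_measure S). \<forall>n. \<not> win P k t n x}"
    have Zs: "?Z \<in> sets (coin_measure S)"
    proof -
      have "?Z = (\<Inter>n. {t \<in> space (coin_measure S). \<not> win P k t n x}) \<inter> space (coin_measure S)" by auto
      also have "\<dots> \<in> sets (coin_measure S)"
        by (intro sets.Int sets.countable_INT') (auto simp: sets_coin_fail)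
      finally show ?thesis .
    qed
    have le: "measure (coin_measure S) ?Z \<le> c ^ n" for n
    proof -
      have "measure (coin_measure S) ?Z \<le> measure (coin_measure S) {t \<in> space (coin_measure S). \<not> win P k t n x}"
        by (rule C.finite_measure_mono) (auto intro: sets_coin_fail)
      also have "\<dots> = c ^ n" using fail_prob[OF ik, of P n x] by (simp add: S_def c_def)
      finally show ?thesis .
    qed
    have "(\<lambda>n. c ^ n) \<longlonglongrightarrow> 0" by (rule LIMSEQ_power_zero) (use c in auto)
    then have "measure (coin_measure S) ?Z \<le> 0"
      by (rule LIMSEQ_le_const) (use le in auto)
    then have "measure (coin_measure S) ?Z = 0" by (simp add: order.antisym)
    then show ?thesis using Zs by (intro null_setsI) (auto simp: C.emeasure_eq_measure)
  qed
  then show ?thesis unfolding S_def[symmetric]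
    by (intro null_sets_UN') auto
qed

lemma pv_Suc: "path_vertex p (Suc m) = path_vertex p m @ [p m]"
  by (simp add: path_vertex_def)

lemma force_inf:
  assumes all: "\<forall>x. \<exists>n. win P k t n x"
  obtains \<tau> where "\<And>p. (\<forall>m. fst (t (path_vertex p m)) = P \<longrightarrow> p m = \<tau> (path_vertex p m)) \<Longrightarrow>
      \<exists>\<^sub>\<infinity>m. snd (t (path_vertex p m)) = k"
proof -
  define r where "r x = (LEAST n. win P k t n x)" for x
  define \<tau> where "\<tau> x = (\<not> win P k t (r x - 1) (x@[False]))" for x
  have rw: "win P k t (r x) x" for x
    unfolding r_def using all by (meson LeastI)
  have rl: "win P k t n x \<Longrightarrow> r x \<le> n" for n x
    unfolding r_def by (rule Least_le)
  have main: "\<exists>m'\<ge>m. snd (t (path_vertex p m')) = k"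
    if fol: "\<forall>m. fst (t (path_vertex p m)) = P \<longrightarrow> p m = \<tau> (path_vertex p m)" for p m
  proof -
    have "\<forall>m. r (path_vertex p m) = N \<longrightarrow> (\<exists>m'\<ge>m. snd (t (path_vertex p m')) = k)" for N
    proof (induction N rule: less_induct)
      case (less N)
      show ?case
      proof (intro allI impI)
        fix m assume rN: "r (path_vertex p m) = N"
        let ?v = "path_vertex p m"
        have w: "win P k t N ?v" using rw[of ?v] rN by simp
        then obtain N' where N': "N = Suc N'" by (cases N) auto
        show "\<exists>m'\<ge>m. snd (t (path_vertex p m')) = k"
        proof (cases "snd (t ?v) = k")
          case True then show ?thesis by auto
        next
          case False
          have "win P k t N' (?v @ [p m])"
          proof (cases "fst (t ?v) = P")
            case True
            then have "p m = \<tau> ?v" using fol by auto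
            then show ?thesis using w N' False True rN by (auto simp: \<tau>_def)
          next
            case F2: False
            then show ?thesis using w N' False by (cases "p m") auto
          qed
          then have "r (path_vertex p (Suc m)) < N" using rl N' by (fastforce simp: pv_Suc)
          then obtain m' where "m' \<ge> Suc m" "snd (t (path_vertex p m')) = k"
            using less.IH by blast
          then show ?thesis by (intro exI[of _ m']) auto
        qed
      qed
    qed
    then show ?thesis by blast
  qed
  show ?thesis
    by (rule that[of \<tau>]) (use main in \<open>auto simp: INFM_nat_le\<close>)
qed

lemma max_k:
  assumes lab: "\<forall>x. t x \<in> Sigma_ik i k" and inf: "\<exists>\<^sub>\<infinity>n. snd (t (path_vertex p n)) = k"
  shows "Max {m. \<exists>\<^sub>\<infinity>n. snd (t (path_vertex p n)) = m} = k"
proof (rule Max_eqI)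
  have "{m. \<exists>\<^sub>\<infinity>n. snd (t (path_vertex p n)) = m} \<subseteq> {i..k}"
  proof
    fix m assume "m \<in> {m. \<exists>\<^sub>\<infinity>n. snd (t (path_vertex p n)) = m}"
    then obtain n where "snd (t (path_vertex p n)) = m" by (auto dest: INFM_EX)
    then show "m \<in> {i..k}" using lab[rule_format, of "path_vertex p n"] by (auto simp: Sigma_ik_def)
  qed
  then show "finite {m. \<exists>\<^sub>\<infinity>n. snd (t (path_vertex p n)) = m}" by (rule finite_subset) simp
  show "y \<le> k" if "y \<in> {m. \<exists>\<^sub>\<infinity>n. snd (t (path_vertex p n)) = m}" for y
    using that \<open>_ \<subseteq> {i..k}\<close> by auto
  show "k \<in> {m. \<exists>\<^sub>\<infinity>n. snd (t (path_vertex p n)) = m}" using inf by simp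
qed


theorem proposition3:
  fixes i k :: nat
  assumes "i < k"
  shows "W i k \<in> sets (completion (coin_measure (Sigma_ik i k))) \<and>
         emeasure (completion (coin_measure (Sigma_ik i k))) (W i k) = (if odd k then 0 else 1)"
proof -
  define S where "S = Sigma_ik i k"
  have fin: "finite S" "S \<noteq> {}" using assms by (auto simp: S_def Sigma_ik_def UNIV_player)
  interpret C: prob_space "coin_measure S" by (rule coin_prob[OF fin])
  interpret C': prob_space "completion (coin_measure S)" by (rule C.prob_space_completion)
  define N where "N P = (\<Union>x. {t \<in> space (coin_measure S). \<forall>n. \<not> win P k t n x})" for P
  have Nnull: "N P \<in> null_sets (coin_measure S)" for P
    unfolding N_def S_def by (rule null_N[OF assms])
  have Wsp: "W i k \<subseteq> space (coin_measure S)"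
    by (auto simp: W_def space_coin S_def)
  show ?thesis
  proof (cases "odd k")
    case True
    have "W i k \<subseteq> N PAll"
    proof
      fix t assume tW: "t \<in> W i k"
      show "t \<in> N PAll"
      proof (rule ccontr)
        assume "t \<notin> N PAll"
        then have all: "\<forall>x. \<exists>n. win PAll k t n x" using tW Wsp unfolding N_def by blast
        obtain \<tau> where tau: "\<And>p. (\<forall>m. fst (t (path_vertex p m)) = PAll \<longrightarrow> p m = \<tau> (path_vertex p m)) \<Longrightarrow>
            \<exists>\<^sub>\<infinity>m. snd (t (path_vertex p m)) = k"
          using force_inf[OF all] by blast
        from tW obtain \<sigma> where lab: "\<forall>x. t x \<in> Sigma_ik i k" and sig: "\<forall>p. consistent t \<sigma> p \<longrightarrow> parity_win t p"
          unfolding W_def by blast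
        define d where "d x = (if fst (t x) = PEx then \<sigma> x else \<tau> x)" for x
        define v where "v = rec_nat [] (\<lambda>m vm. vm @ [d vm])"
        define p where "p m = d (v m)" for m
        have pv: "path_vertex p m = v m" for m
          by (induction m) (simp_all add: path_vertex_def v_def p_def)
        have "consistent t \<sigma> p" unfolding consistent_def pv by (simp add: p_def d_def)
        then have pw: "parity_win t p" using sig by blast
        have "\<forall>m. fst (t (path_vertex p m)) = PAll \<longrightarrow> p m = \<tau> (path_vertex p m)"
          unfolding pv by (simp add: p_def d_def)
        then have "\<exists>\<^sub>\<infinity>m. snd (t (path_vertex p m)) = k" by (rule tau)
        then have "Max {m. \<exists>\<^sub>\<infinity>n. snd (t (path_vertex p n)) = m} = k" by (rule max_k[OF lab])
        then show False using pw True unfolding parity_win_def by simp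
      qed
    qed
    then have Ws: "W i k \<in> sets (completion (coin_measure S))"
      using Nnull by (intro null_sets_completion) auto
    have "N PAll \<in> null_sets (completion (coin_measure S))" by (rule null_sets_completionI[OF Nnull])
    then have "emeasure (completion (coin_measure S)) (W i k) = 0"
      using \<open>W i k \<subseteq> N PAll\<close> Ws by (meson null_sets_subset null_setsD1)
    then show ?thesis using Ws True by (simp add: S_def)
  next
    case False
    have sub: "space (coin_measure S) - N PEx \<subseteq> W i k"
    proof
      fix t assume t: "t \<in> space (coin_measure S) - N PEx"
      then have all: "\<forall>x. \<exists>n. win PEx k t n x" unfolding N_def by blast
      have lab: "\<forall>x. t x \<in> Sigma_ik i k" using t by (simp add: space_coin S_def)
      obtain \<tau> where tau: "\<And>p. (\<forall>m. fst (t (path_vertex p m)) = PEx \<longrightarrow> p m = \<tau> (path_vertex p m)) \<Longrightarrow>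
          \<exists>\<^sub>\<infinity>m. snd (t (path_vertex p m)) = k"
        using force_inf[OF all] by blast
      have "\<forall>p. consistent t \<tau> p \<longrightarrow> parity_win t p"
      proof (intro allI impI)
        fix p assume "consistent t \<tau> p"
        then have "\<exists>\<^sub>\<infinity>m. snd (t (path_vertex p m)) = k" by (intro tau) (simp add: consistent_def)
        then have "Max {m. \<exists>\<^sub>\<infinity>n. snd (t (path_vertex p n)) = m} = k" by (rule max_k[OF lab])
        then show "parity_win t p" using False unfolding parity_win_def by simp
      qed
      then show "t \<in> W i k" using lab unfolding W_def by blast
    qed
    have eqW: "W i k = (space (coin_measure S) - N PEx) \<union> (W i k \<inter> N PEx)" using sub Wsp by blast
    have Ws: "W i k \<in> sets (completion (coin_measure S))"
      by (rule sets_completionI[OF eqW _ Nnull]) (auto intro: null_setsD2[OF Nnull])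
    have N': "N PEx \<in> null_sets (completion (coin_measure S))" by (rule null_sets_completionI[OF Nnull])
    have "emeasure (completion (coin_measure S)) (space (coin_measure S) - N PEx) = 1"
      using emeasure_Diff_null_set[OF N', of "space (completion (coin_measure S))"] C'.emeasure_space_1
      by simp
    moreover have "emeasure (completion (coin_measure S)) (space (coin_measure S) - N PEx) \<le> emeasure (completion (coin_measure S)) (W i k)"
      by (rule emeasure_mono[OF sub Ws])
    moreover have "emeasure (completion (coin_measure S)) (W i k) \<le> 1"
      by (rule C'.measure_le_1)
    ultimately have "emeasure (completion (coin_measure S)) (W i k) = 1" by simp
    then show ?thesis using Ws False by (simp add: S_def)
  qed
qed

end
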